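(* Every $3$-CET with exactly one flip has a periodic point. Consequently there is no transitive $3$-CET with exactly one flip.
   Context: Let $S^1=[0,1]/(0\sim 1)$ with the orientation induced by $[0,1]$. Let $I_1,\dots,I_n$ be pairwise disjoint open subintervals of $S^1$ whose closures cover $S^1$. An $n$-CET is an injective map $T:\bigcup_{i=1}^n I_i\to S^1$ which is an isometry on each $I_i$ and which cannot be continuously extended to a larger open subset of $S^1$ (so it has exactly $n$ discontinuity points). A flip is a subinterval $I_i$ on which $T$ reverses orientation. A periodic point is $p$ with $T^m(p)=p$ for some $m\ge1$ (with $p\in\mathrm{Dom}(T^m)$). The orbit of $p$ is $\{T^m(p): m\in\mathbb{Z},\ p\in\mathrm{Dom}(T^m)\}$ and $T$ is transitive if some orbit is dense in $S^1$. *)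

theory Defs
  imports "HOL-Analysis.Analysis"
begin

text \<open>The circle S^1 = [0,1]/(0~1) is represented by the real interval {0..<1};
  a point x is identified with its representative, and frac reduces mod 1.\<close>

definition circ :: "real set" where
  "circ = {0..<1}"

definition arc :: "real \<Rightarrow> real \<Rightarrow> real set" where
  "arc a L = {x \<in> circ. 0 < frac (x - a) \<and> frac (x - a) < L}"

text \<open>Cut points c 0 < ... < c (n-1) in [0,1); the i-th interval is the arc
  from c i to c (i+1) (cyclically).\<close>
definition cut_len :: "nat \<Rightarrow> (nat \<Rightarrow> real) \<Rightarrow> nat \<Rightarrow> real" where
  "cut_len n c i = (if Suc i < n then c (Suc i) - c i else 1 + c 0 - c i)"

definition cut_int :: "nat \<Rightarrow> (nat \<Rightarrow> real) \<Rightarrow> nat \<Rightarrow> real set" where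
  "cut_int n c i = arc (c i) (cut_len n c i)"

definition piece :: "(nat \<Rightarrow> real) \<Rightarrow> (nat \<Rightarrow> bool) \<Rightarrow> nat \<Rightarrow> real \<Rightarrow> real" where
  "piece t fl i x = (if fl i then frac (t i - x) else frac (t i + x))"

text \<open>Maximality (no continuous
  extension to a larger open set) means that at every cut point the limits
  from the left interval and from the right interval differ.\<close>
definition cet_data :: "nat \<Rightarrow> (nat \<Rightarrow> real) \<Rightarrow> (nat \<Rightarrow> real) \<Rightarrow> (nat \<Rightarrow> bool)
     \<Rightarrow> real set \<Rightarrow> (real \<Rightarrow> real) \<Rightarrow> bool" where
  "cet_data n c t fl D T \<longleftrightarrow>
     n \<ge> 1 \<and> 0 \<le> c 0 \<and> c (n - 1) < 1 \<and> (\<forall>i. Suc i < n \<longrightarrow> c i < c (Suc i)) \<and>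
     D = (\<Union>i<n. cut_int n c i) \<and>
     (\<forall>i<n. \<forall>x\<in>cut_int n c i. T x = piece t fl i x) \<and>
     inj_on T D \<and>
     (\<forall>i<n. piece t fl ((i + n - 1) mod n) (c i) \<noteq> piece t fl i (c i))"

definition cet_flips :: "nat \<Rightarrow> nat \<Rightarrow> real set \<Rightarrow> (real \<Rightarrow> real) \<Rightarrow> bool" where
  "cet_flips n k D T \<longleftrightarrow>
     (\<exists>c t fl. cet_data n c t fl D T \<and> card {i. i < n \<and> fl i} = k)"

fun dom_iter :: "real set \<Rightarrow> (real \<Rightarrow> real) \<Rightarrow> nat \<Rightarrow> real set" where
  "dom_iter D T 0 = circ"
| "dom_iter D T (Suc m) = {x \<in> D. T x \<in> dom_iter D T m}"

definition periodic_point :: "real set \<Rightarrow> (real \<Rightarrow> real) \<Rightarrow> real \<Rightarrow> bool" where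
  "periodic_point D T p \<longleftrightarrow> (\<exists>m\<ge>1. p \<in> dom_iter D T m \<and> (T ^^ m) p = p)"

text \<open>Orbit: forward iterates T^m p and backward iterates T^{-m} p
  (points q with T^m q = p), T being injective.\<close>
definition orbit :: "real set \<Rightarrow> (real \<Rightarrow> real) \<Rightarrow> real \<Rightarrow> real set" where
  "orbit D T p = {(T ^^ m) p | m. p \<in> dom_iter D T m}
              \<union> {q. \<exists>m. q \<in> dom_iter D T m \<and> (T ^^ m) q = p}"

text \<open>Dense in S^1: every open arc meets it; equivalently, with the
  representation {0..<1}, its closure in the reals contains {0..<1}.\<close>
definition transitive :: "real set \<Rightarrow> (real \<Rightarrow> real) \<Rightarrow> bool" where
  "transitive D T \<longleftrightarrow> (\<exists>p\<in>circ. circ \<subseteq> closure (orbit D T p))"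

end

theory Submission
  imports Defs
begin


lemma frac_minus_self_Ints: "frac y - y \<in> \<int>"
  by (simp add: frac_def)

lemma fcong: "x - y \<in> \<int> \<Longrightarrow> frac x = frac y"
  using frac_add_int_right[of "x - y" y] by (simp add: add.commute)

lemma frac_cong_Ints: "frac x - y \<in> \<int> \<longleftrightarrow> x - y \<in> \<int>"
proof -
  have "frac x - y = (x - y) + (frac x - x)" by simp
  moreover have "x - y = (frac x - y) - (frac x - x)" by simp
  ultimately show ?thesis using frac_minus_self_Ints[of x]
    by (metis Ints_add Ints_diff)
qed

lemma arc_iff: "x \<in> arc a L \<longleftrightarrow> x \<in> circ \<and> 0 < frac (x - a) \<and> frac (x - a) < L"
  by (simp add: arc_def)

lemma circ_iff: "x \<in> circ \<longleftrightarrow> 0 \<le> x \<and> x < 1"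
  by (simp add: circ_def)

lemma frac_circ: "frac x \<in> circ"
  by (simp add: circ_def frac_lt_1)

lemma frac_circ_id: "x \<in> circ \<Longrightarrow> frac x = x"
  by (simp add: circ_def)

lemma arc_circ: "arc a L \<subseteq> circ"
  by (auto simp: arc_def)

lemma frac_inj_close: fixes a b :: real shows "frac a = frac b \<Longrightarrow> \<bar>a - b\<bar> < 1 \<Longrightarrow> a = b"
proof -
  assume "frac a = frac b" "\<bar>a - b\<bar> < 1"
  then obtain n where n: "a = b + of_int n" by (elim frac_eqE)
  with \<open>\<bar>a - b\<bar> < 1\<close> have "\<bar>of_int n :: real\<bar> < 1" by simp
  then have "n = 0" by linarith
  with n show ?thesis by simp
qed

lemma arc_borel: "arc a L \<in> sets borel"
  unfolding arc_def circ_def frac_def by measurable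

lemma finite_borel: "finite (X::real set) \<Longrightarrow> X \<in> sets borel"
  by (simp add: finite_imp_closed)

lemma transl_borel: "(S::real set) \<in> sets borel \<Longrightarrow> (+) c ` S \<in> sets borel"
proof -
  assume S: "S \<in> sets borel"
  have "(+) c ` S = (\<lambda>x. x - c) -` S" by force
  moreover have "(\<lambda>x::real. x - c) \<in> borel_measurable borel" by measurable
  ultimately show ?thesis using measurable_sets[of "\<lambda>x::real. x - c" borel borel S] S by simp
qed

lemma refl_borel: "(S::real set) \<in> sets borel \<Longrightarrow> (\<lambda>x. c - x) ` S \<in> sets borel"
proof -
  assume S: "S \<in> sets borel"
  have "(\<lambda>x. c - x) ` S = (\<lambda>x. c - x) -` S" by force
  moreover have "(\<lambda>x::real. c - x) \<in> borel_measurable borel" by measurable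
  ultimately show ?thesis using measurable_sets[of "\<lambda>x::real. c - x" borel borel S] S by simp
qed

lemma bounded_Ico: "bounded {a..<b::real}"
  by simp

lemma borel_lmeas: "(S::real set) \<in> sets borel \<Longrightarrow> bounded S \<Longrightarrow> S \<in> lmeasurable"
  by (simp add: bounded_set_imp_lmeasurable)

lemma madd:
  fixes X Y :: "real set"
  assumes "X \<in> sets borel" "Y \<in> sets borel" "bounded X" "bounded Y" "X \<inter> Y = {}"
  shows "measure lebesgue (X \<union> Y) = measure lebesgue X + measure lebesgue Y"
  using measure_Un3[of X lebesgue Y] assms borel_lmeas by simp

lemma measure_transl: "measure lebesgue ((+) c ` S) = measure lebesgue (S::real set)"
  by (rule measure_translation)

lemma measure_refl: "measure lebesgue ((\<lambda>x. c - x) ` S) = measure lebesgue (S::real set)"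
proof -
  have "(\<lambda>x. c - x) ` S = (\<lambda>x. (-1) *\<^sub>R x + c) ` S" by (rule image_cong) auto
  then show ?thesis using measure_lebesgue_affine[of "-1" c S] by simp
qed

lemma frac_image:
  fixes B :: "real set" and n :: int
  assumes B: "B \<in> sets borel" and sub: "B \<subseteq> {of_int n - 1 ..< of_int n + 1}" and inj: "inj_on frac B"
  shows "frac ` B \<in> sets borel \<and> measure lebesgue (frac ` B) = measure lebesgue B"
proof -
  define B1 where "B1 = B \<inter> {..<of_int n}"
  define B2 where "B2 = B \<inter> {of_int n..}"
  have B12: "B = B1 \<union> B2" "B1 \<inter> B2 = {}" by (auto simp: B1_def B2_def)
  have bor: "B1 \<in> sets borel" "B2 \<in> sets borel" using B by (auto simp: B1_def B2_def)
  have f1: "frac y = (1 - of_int n) + y" if "y \<in> B1" for y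
  proof -
    have "y - ((1 - of_int n) + y) = of_int (n - 1)" by simp
    then show ?thesis using that sub unfolding B1_def frac_unique_iff by auto
  qed
  have f2: "frac y = (- of_int n) + y" if "y \<in> B2" for y
  proof -
    have "y - ((- of_int n) + y) = of_int n" by simp
    then show ?thesis using that sub unfolding B2_def frac_unique_iff by auto
  qed
  have i1: "frac ` B1 = (+) (1 - of_int n) ` B1" using f1 by (rule image_cong[OF refl])
  have i2: "frac ` B2 = (+) (- of_int n) ` B2" using f2 by (rule image_cong[OF refl])
  have im: "frac ` B = frac ` B1 \<union> frac ` B2" using B12 by auto
  have "frac ` B1 \<inter> frac ` B2 = frac ` (B1 \<inter> B2)"
    using inj_on_image_Int[OF inj, of B1 B2] B12 by auto
  then have dis: "frac ` B1 \<inter> frac ` B2 = {}" using B12 by simp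
  have "B1 \<subseteq> {of_int n - 1 ..< of_int n + 1}" "B2 \<subseteq> {of_int n - 1 ..< of_int n + 1}"
    using sub by (auto simp: B1_def B2_def)
  then have bd: "bounded B1" "bounded B2" using bounded_subset[OF bounded_Ico] by blast+
  have bor2: "frac ` B1 \<in> sets borel" "frac ` B2 \<in> sets borel"
    using transl_borel[OF bor(1), of "1 - of_int n"] transl_borel[OF bor(2), of "- of_int n"]
    unfolding i1 i2 by auto
  have "frac ` B1 \<subseteq> {0..<1}" "frac ` B2 \<subseteq> {0..<1}" by (auto simp: frac_lt_1)
  then have bd2: "bounded (frac ` B1)" "bounded (frac ` B2)" using bounded_subset[OF bounded_Ico] by blast+
  have "measure lebesgue (frac ` B) = measure lebesgue (frac ` B1) + measure lebesgue (frac ` B2)"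
    unfolding im by (rule madd[OF bor2 bd2 dis])
  also have "\<dots> = measure lebesgue B1 + measure lebesgue B2"
    unfolding i1 i2 by (simp only: measure_transl)
  also have "\<dots> = measure lebesgue (B1 \<union> B2)"
    by (rule madd[OF bor bd B12(2), symmetric])
  also have "\<dots> = measure lebesgue B"
    by (simp only: B12(1)[symmetric])
  finally have "measure lebesgue (frac ` B) = measure lebesgue B" .
  moreover have "frac ` B \<in> sets borel" unfolding im by (rule sets.Un[OF bor2])
  ultimately show ?thesis by blast
qed

lemma trans_piece:
  fixes B :: "real set"
  assumes B: "B \<in> sets borel" "B \<subseteq> circ"
  shows "(\<lambda>x. frac (s + x)) ` B \<in> sets borel \<and> measure lebesgue ((\<lambda>x. frac (s + x)) ` B) = measure lebesgue B"
proof -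
  have eq: "(\<lambda>x. frac (s + x)) ` B = frac ` ((+) s ` B)" by auto
  have sub: "(+) s ` B \<subseteq> {of_int (\<lfloor>s\<rfloor> + 1) - 1 ..< of_int (\<lfloor>s\<rfloor> + 1) + 1}"
  proof
    fix y assume "y \<in> (+) s ` B"
    then obtain x where "x \<in> B" "y = s + x" by auto
    moreover have "0 \<le> x" "x < 1" using B(2) \<open>x \<in> B\<close> by (auto simp: circ_def)
    moreover have "of_int \<lfloor>s\<rfloor> \<le> s" "s < of_int \<lfloor>s\<rfloor> + 1" "of_int (\<lfloor>s\<rfloor> + 1) = of_int \<lfloor>s\<rfloor> + (1::real)"
      by simp_all
    ultimately show "y \<in> {of_int (\<lfloor>s\<rfloor> + 1) - 1 ..< of_int (\<lfloor>s\<rfloor> + 1) + 1}"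
      unfolding atLeastLessThan_iff by (intro conjI; linarith)
  qed
  have inj: "inj_on frac ((+) s ` B)"
  proof (rule inj_onI)
    fix u v assume "u \<in> (+) s ` B" "v \<in> (+) s ` B" "frac u = frac v"
    moreover have hb: "\<And>x. x \<in> B \<Longrightarrow> 0 \<le> x \<and> x < 1" using B(2) by (auto simp: circ_def)
    ultimately have "\<bar>u - v\<bar> < 1" by (auto dest!: hb)
    then show "u = v" using \<open>frac u = frac v\<close> using frac_inj_close by blast
  qed
  from frac_image[OF transl_borel[OF B(1)] sub inj] show ?thesis unfolding eq by (simp only: measure_transl)
qed

lemma refl_piece:
  fixes B :: "real set"
  assumes B: "B \<in> sets borel" "B \<subseteq> circ"
  shows "(\<lambda>x. frac (s - x)) ` B \<in> sets borel \<and> measure lebesgue ((\<lambda>x. frac (s - x)) ` B) = measure lebesgue B"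
proof -
  have eq: "(\<lambda>x. frac (s - x)) ` B = frac ` ((\<lambda>x. s - x) ` B)" by auto
  have sub: "(\<lambda>x. s - x) ` B \<subseteq> {of_int (\<lfloor>s\<rfloor>) - 1 ..< of_int (\<lfloor>s\<rfloor>) + 1}"
  proof
    fix y assume "y \<in> (\<lambda>x. s - x) ` B"
    then obtain x where "x \<in> B" "y = s - x" by auto
    moreover have "0 \<le> x" "x < 1" using B(2) \<open>x \<in> B\<close> by (auto simp: circ_def)
    moreover have "of_int \<lfloor>s\<rfloor> \<le> s" "s < of_int \<lfloor>s\<rfloor> + 1"
      by simp_all
    ultimately show "y \<in> {of_int (\<lfloor>s\<rfloor>) - 1 ..< of_int (\<lfloor>s\<rfloor>) + 1}"
      unfolding atLeastLessThan_iff by (intro conjI; linarith)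
  qed
  have inj: "inj_on frac ((\<lambda>x. s - x) ` B)"
  proof (rule inj_onI)
    fix u v assume "u \<in> (\<lambda>x. s - x) ` B" "v \<in> (\<lambda>x. s - x) ` B" "frac u = frac v"
    moreover have hb: "\<And>x. x \<in> B \<Longrightarrow> 0 \<le> x \<and> x < 1" using B(2) by (auto simp: circ_def)
    ultimately have "\<bar>u - v\<bar> < 1" by (auto dest!: hb)
    then show "u = v" using \<open>frac u = frac v\<close> using frac_inj_close by blast
  qed
  from frac_image[OF refl_borel[OF B(1)] sub inj] show ?thesis unfolding eq by (simp only: measure_refl)
qed

section \<open>Iterates\<close>

lemma dom_sub: "D \<subseteq> circ \<Longrightarrow> dom_iter D T m \<subseteq> circ"
  by (induction m) auto

lemma dom_add:
  assumes "D \<subseteq> circ"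
  shows "x \<in> dom_iter D T (a + b) \<longleftrightarrow> x \<in> dom_iter D T a \<and> (T ^^ a) x \<in> dom_iter D T b"
proof (induction a arbitrary: x)
  case 0
  then show ?case using dom_sub[OF assms, of T b] by auto
next
  case (Suc a)
  then show ?case by (simp add: funpow_swap1)
qed

lemma dom_mono: "D \<subseteq> circ \<Longrightarrow> m \<le> n \<Longrightarrow> dom_iter D T n \<subseteq> dom_iter D T m"
proof -
  assume a: "D \<subseteq> circ" "m \<le> n"
  then obtain k where n: "n = m + k" using le_Suc_ex by blast
  show ?thesis unfolding n using dom_add[OF a(1), of _ T m k] by blast
qed

lemma dom_one: fixes D :: "real set" shows "dom_iter D T 1 = {x \<in> D. T x \<in> circ}"
  by simp

lemma inj_iter: "inj_on T D \<Longrightarrow> inj_on (T ^^ k) (dom_iter D T k)"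
proof (induction k)
  case 0
  then show ?case by simp
next
  case (Suc k)
  show ?case
  proof (rule inj_onI)
    fix x y assume x: "x \<in> dom_iter D T (Suc k)" and y: "y \<in> dom_iter D T (Suc k)"
      and e: "(T ^^ Suc k) x = (T ^^ Suc k) y"
    from e have "(T ^^ k) (T x) = (T ^^ k) (T y)" by (metis funpow_Suc_right comp_apply)
    with x y Suc have "T x = T y" by (auto dest: inj_onD)
    with x y Suc show "x = y" by (auto dest: inj_onD)
  qed
qed

lemma dom_fin:
  assumes "finite (circ - D)" "inj_on T D" "\<And>x. x \<in> D \<Longrightarrow> T x \<in> circ"
  shows "finite (circ - dom_iter D T m)"
proof (induction m)
  case 0
  then show ?case by simp
next
  case (Suc m)
  let ?S = "{x \<in> D. T x \<in> circ - dom_iter D T m}"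
  have "T ` ?S \<subseteq> circ - dom_iter D T m" by auto
  then have "finite (T ` ?S)" using Suc finite_subset by blast
  moreover have "inj_on T ?S" using assms(2) by (rule inj_on_subset) auto
  ultimately have "finite ?S" using finite_imageD by blast
  moreover have "circ - dom_iter D T (Suc m) \<subseteq> (circ - D) \<union> ?S" using assms(3) by auto
  ultimately show ?case using assms(1) finite_subset by blast
qed




lemma sep:
  fixes T :: "real \<Rightarrow> real"
  assumes A1: "\<And>z. z \<in> circ \<Longrightarrow> 0 < frac (z - P1) \<Longrightarrow> frac (z - P1) < L1 \<Longrightarrow> \<exists>x\<in>X1. T x = z"
    and A2: "\<And>z. z \<in> circ \<Longrightarrow> 0 < frac (z - P2) \<Longrightarrow> frac (z - P2) < L2 \<Longrightarrow> \<exists>x\<in>X2. T x = z"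
    and dj: "X1 \<inter> X2 = {}" and inj: "inj_on T (X1 \<union> X2)"
    and L: "0 < L1" "0 < L2" "L1 \<le> 1" "L2 \<le> 1"
  shows "L1 \<le> frac (P2 - P1)"
proof (rule ccontr)
  assume nle: "\<not> L1 \<le> frac (P2 - P1)"
  define r where "r = frac (P2 - P1)"
  have r: "0 \<le> r" "r < L1" using nle by (auto simp: r_def)
  define e where "e = min L2 (L1 - r) / 2"
  have e: "0 < e" "e < L2" "r + e < L1" using r L unfolding e_def by (auto simp: min_def field_simps)
  define z where "z = frac (P2 + e)"
  have z: "z \<in> circ" by (simp add: z_def frac_circ)
  have "frac (z - P2) = frac e"
  proof (rule fcong)
    have "z - P2 - e = frac (P2 + e) - (P2 + e)" by (simp add: z_def)
    then show "z - P2 - e \<in> \<int>" using frac_minus_self_Ints by metis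
  qed
  also have "frac e = e" using e L by (simp add: frac_eq)
  finally have z2: "frac (z - P2) = e" .
  have "frac (z - P1) = frac (r + e)"
  proof (rule fcong)
    have "z - P1 - (r + e) = (frac (P2 + e) - (P2 + e)) - (frac (P2 - P1) - (P2 - P1))"
      by (simp add: z_def r_def)
    then show "z - P1 - (r + e) \<in> \<int>" using frac_minus_self_Ints by (metis Ints_diff)
  qed
  also have "frac (r + e) = r + e" using e r L by (simp add: frac_eq)
  finally have z1: "frac (z - P1) = r + e" .
  obtain x1 where x1: "x1 \<in> X1" "T x1 = z" using A1[OF z] z1 r e by auto
  obtain x2 where x2: "x2 \<in> X2" "T x2 = z" using A2[OF z] z2 e by auto
  have "x1 = x2" using inj x1 x2 by (auto dest: inj_onD)
  then show False using x1 x2 dj by auto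
qed

locale cet3 =
  fixes D :: "real set" and T :: "real \<Rightarrow> real"
    and cf ca cb l g h tf ta tb :: real
  assumes pos: "0 < l" "0 < g" "0 < h" and sum1: "l + g + h = 1"
    and cf_circ: "cf \<in> circ"
    and ca_cong: "ca - cf - l \<in> \<int>" and cb_cong: "cb - ca - g \<in> \<int>"
    and D_eq: "D = arc cf l \<union> arc ca g \<union> arc cb h"
    and disj: "arc cf l \<inter> arc ca g = {}" "arc cf l \<inter> arc cb h = {}" "arc ca g \<inter> arc cb h = {}"
    and Tf: "\<And>x. x \<in> arc cf l \<Longrightarrow> T x = frac (tf - x)"
    and Ta: "\<And>x. x \<in> arc ca g \<Longrightarrow> T x = frac (ta + x)"
    and Tb: "\<And>x. x \<in> arc cb h \<Longrightarrow> T x = frac (tb + x)"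
    and inj: "inj_on T D"
    and maxi: "frac (ta + cb) \<noteq> frac (tb + cb)"
    and fin: "finite (circ - D)"
begin

lemma D_circ: "D \<subseteq> circ" using arc_circ D_eq by auto

lemma T_circ: "x \<in> D \<Longrightarrow> T x \<in> circ" using Tf Ta Tb D_eq frac_circ by auto

lemma le1: "l \<le> 1" "g \<le> 1" "h \<le> 1" using pos sum1 by auto

lemma cc_cong: "cf - cb - h \<in> \<int>"
proof -
  have "cf - cb - h = - (ca - cf - l) - (cb - ca - g) - 1" using sum1 by linarith
  then show ?thesis using ca_cong cb_cong by (metis Ints_1 Ints_diff Ints_minus)
qed

lemma img_f:
  assumes "z \<in> circ" "0 < frac (z - (tf - cf - l))" "frac (z - (tf - cf - l)) < l"
  shows "\<exists>x\<in>arc cf l. T x = z"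
proof -
  define s where "s = frac (z - (tf - cf - l))"
  define x where "x = frac (tf - z)"
  have c1: "frac (x - cf) = frac (l - s)"
  proof (rule fcong)
    have "x - cf - (l - s) = (frac (tf - z) - (tf - z)) + (s - (z - (tf - cf - l)))"
      by (simp add: x_def)
    then show "x - cf - (l - s) \<in> \<int>"
      unfolding s_def using frac_minus_self_Ints by (metis Ints_add)
  qed
  have s: "0 < s" "s < l" using assms unfolding s_def by simp_all
  have c2: "frac (l - s) = l - s" using s le1 by (simp add: frac_eq)
  have xc: "x \<in> circ" unfolding x_def by (rule frac_circ)
  have xa: "x \<in> arc cf l" unfolding arc_iff using c1 c2 s xc by simp
  have "T x = frac (tf - x)" using Tf[OF xa] .
  also have "\<dots> = frac z"
  proof (rule fcong)
    have "tf - x - z = - (frac (tf - z) - (tf - z))" by (simp add: x_def)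
    then show "tf - x - z \<in> \<int>" using frac_minus_self_Ints by (metis Ints_minus)
  qed
  also have "\<dots> = z" using assms(1) by (rule frac_circ_id)
  finally show ?thesis using xa by blast
qed

lemma img_t:
  assumes tr: "\<And>x. x \<in> arc c L \<Longrightarrow> T x = frac (t + x)"
    and "z \<in> circ" "0 < frac (z - (t + c))" "frac (z - (t + c)) < L"
  shows "\<exists>x\<in>arc c L. T x = z"
proof -
  define x where "x = frac (z - t)"
  have "frac (x - c) = frac (z - (t + c))"
  proof (rule fcong)
    have "x - c - (z - (t + c)) = frac (z - t) - (z - t)" by (simp add: x_def)
    then show "x - c - (z - (t + c)) \<in> \<int>" using frac_minus_self_Ints by metis
  qed
  then have xa: "x \<in> arc c L" using assms unfolding arc_iff by (simp add: x_def frac_circ)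
  have "T x = frac (t + x)" using tr[OF xa] .
  also have "\<dots> = frac z"
  proof (rule fcong)
    have "t + x - z = frac (z - t) - (z - t)" by (simp add: x_def)
    then show "t + x - z \<in> \<int>" using frac_minus_self_Ints by metis
  qed
  also have "\<dots> = z" using assms(2) by (rule frac_circ_id)
  finally show ?thesis using xa by blast
qed

lemmas img_a = img_t[OF Ta] and img_b = img_t[OF Tb]

lemma injs: "inj_on T (arc cf l \<union> arc ca g)" "inj_on T (arc cf l \<union> arc cb h)"
    "inj_on T (arc ca g \<union> arc cb h)"
  using inj D_eq by (auto intro: inj_on_subset)

lemma injs': "inj_on T (arc ca g \<union> arc cf l)" "inj_on T (arc cb h \<union> arc cf l)"
    "inj_on T (arc cb h \<union> arc ca g)"
  using injs by (simp_all add: Un_commute)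

lemma disj': "arc ca g \<inter> arc cf l = {}" "arc cb h \<inter> arc cf l = {}" "arc cb h \<inter> arc ca g = {}"
  using disj by (simp_all add: Int_commute)

lemma ineq:
  "l \<le> frac ((ta + ca) - (tf - cf - l))" "g \<le> frac ((tf - cf - l) - (ta + ca))"
  "l \<le> frac ((tb + cb) - (tf - cf - l))" "h \<le> frac ((tf - cf - l) - (tb + cb))"
  "g \<le> frac ((tb + cb) - (ta + ca))" "h \<le> frac ((ta + ca) - (tb + cb))"
  using sep[OF img_f img_a disj(1) injs(1) pos(1) pos(2) le1(1) le1(2)]
    sep[OF img_a img_f disj'(1) injs'(1) pos(2) pos(1) le1(2) le1(1)]
    sep[OF img_f img_b disj(2) injs(2) pos(1) pos(3) le1(1) le1(3)]
    sep[OF img_b img_f disj'(2) injs'(2) pos(3) pos(1) le1(3) le1(1)]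
    sep[OF img_a img_b disj(3) injs(3) pos(2) pos(3) le1(2) le1(3)]
    sep[OF img_b img_a disj'(3) injs'(3) pos(3) pos(2) le1(3) le1(2)]
  by auto

lemma frac_neg_nz: "0 < frac x \<Longrightarrow> frac (- x) = 1 - frac x"
  by (simp add: frac_neg)

lemma key0: "(tb + cb) - (tf - cf - l) - l \<in> \<int> \<and> (ta + ca) - (tb + cb) - h \<in> \<int>"
proof -
  define PF where "PF = tf - cf - l"
  define Pa where "Pa = ta + ca"
  define Pb where "Pb = tb + cb"
  define A where "A = frac (Pa - PF)"
  define B where "B = frac (Pb - Pa)"
  define C where "C = frac (PF - Pb)"
  have i: "l \<le> A" "g \<le> B" "h \<le> C" "A < 1" "B < 1" "C < 1"
    using ineq unfolding A_def B_def C_def PF_def Pa_def Pb_def by (auto simp: frac_lt_1)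
  have "frac (PF - Pa) = 1 - A"
  proof -
    have "0 < frac (Pa - PF)" using i(1) pos unfolding A_def by linarith
    then have "frac (- (Pa - PF)) = 1 - frac (Pa - PF)" by (rule frac_neg_nz)
    then show ?thesis by (simp add: A_def)
  qed
  then have j1: "g \<le> 1 - A" using ineq(2) unfolding PF_def Pa_def by simp
  have "frac (Pa - Pb) = 1 - B"
  proof -
    have "0 < frac (Pb - Pa)" using i(2) pos unfolding B_def by linarith
    then have "frac (- (Pb - Pa)) = 1 - frac (Pb - Pa)" by (rule frac_neg_nz)
    then show ?thesis by (simp add: B_def)
  qed
  then have j2: "h \<le> 1 - B" using ineq(6) unfolding Pb_def Pa_def by simp
  have "frac (Pb - PF) = 1 - C"
  proof -
    have "0 < frac (PF - Pb)" using i(3) pos unfolding C_def by linarith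
    then have "frac (- (PF - Pb)) = 1 - frac (PF - Pb)" by (rule frac_neg_nz)
    then show ?thesis by (simp add: C_def)
  qed
  then have j3: "l \<le> 1 - C" using ineq(3) unfolding Pb_def PF_def by simp
  have "A + B + C = (A - (Pa - PF)) + (B - (Pb - Pa)) + (C - (PF - Pb))" by simp
  then have "A + B + C \<in> \<int>" unfolding A_def B_def C_def using frac_minus_self_Ints by (metis Ints_add)
  then obtain n where n: "A + B + C = of_int n" by (elim Ints_cases)
  have r1: "(0::real) < of_int n" using i pos n by linarith
  have r2: "of_int n < (3::real)" using i pos n by linarith
  have "0 < n" "n < 3" using r1 r2 by simp_all
  then have "n = 1 \<or> n = 2" by linarith
  then have cases: "A + B + C = 1 \<or> A + B + C = 2" using n by auto
  have Bint: "(Pb - Pa) - B \<in> \<int>" and Cint: "(PF - Pb) - C \<in> \<int>"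
    unfolding B_def C_def using frac_minus_self_Ints by (metis Ints_minus minus_diff_eq)+
  show "(tb + cb) - (tf - cf - l) - l \<in> \<int> \<and> (ta + ca) - (tb + cb) - h \<in> \<int>"
  proof (cases "A + B + C = 1")
    case True
    then have "B = g" using i pos sum1 by linarith
    have "frac (ta + cb) = frac (tb + cb)"
    proof (rule fcong)
      have "(ta + cb) - (tb + cb) = (cb - ca - g) - ((Pb - Pa) - B)"
        using \<open>B = g\<close> unfolding Pa_def Pb_def by simp
      then show "(ta + cb) - (tb + cb) \<in> \<int>" using cb_cong Bint by (metis Ints_diff)
    qed
    with maxi show ?thesis by simp
  next
    case False
    then have "A + B + C = 2" using cases by simp
    then have "C = 1 - l" "B = 1 - h" using j1 j2 j3 sum1 by linarith+
    have "(tb + cb) - (tf - cf - l) - l = - ((PF - Pb) - C) - 1"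
      using \<open>C = 1 - l\<close> unfolding PF_def Pb_def by simp
    moreover have "(ta + ca) - (tb + cb) - h = - ((Pb - Pa) - B) - 1"
      using \<open>B = 1 - h\<close> unfolding Pa_def Pb_def by simp
    ultimately show ?thesis using Bint Cint by (metis Ints_1 Ints_diff Ints_minus)
  qed
qed

lemmas key = key0[THEN conjunct1] key0[THEN conjunct2]

lemma K: "tf - ta - ca - cb \<in> \<int>"
proof -
  have "tf - ta - ca - cb = - ((tb + cb) - (tf - cf - l) - l) - ((ta + ca) - (tb + cb) - h) + (cf - cb - h)"
    by simp
  then show ?thesis using key cc_cong by (metis Ints_add Ints_diff Ints_minus)
qed

lemma K2: "tf - tb - cf - cb \<in> \<int>"
proof -
  have "tf - tb - cf - cb = - ((tb + cb) - (tf - cf - l) - l)" by simp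
  then show ?thesis using key by (metis Ints_minus)
qed

lemma rev_trans:
  assumes tr: "\<And>x. x \<in> arc c L \<Longrightarrow> T x = frac (t + x)"
    and Kc: "tf - t - c - c - L \<in> \<int>" and L: "0 < L" "L \<le> 1"
    and y: "y \<in> arc c L"
  shows "frac (tf - T y) \<in> arc c L \<and> T (frac (tf - T y)) = frac (tf - y)"
proof -
  define s where "s = frac (y - c)"
  define w where "w = frac (tf - frac (t + y))"
  have s: "0 < s" "s < L" using y unfolding arc_iff s_def by auto
  have w1: "w - (tf - frac (t + y)) \<in> \<int>" unfolding w_def by (rule frac_minus_self_Ints)
  have w2: "(t + y) - frac (t + y) \<in> \<int>" using frac_minus_self_Ints by (metis Ints_minus minus_diff_eq)
  have w3: "s - (y - c) \<in> \<int>" unfolding s_def by (rule frac_minus_self_Ints)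
  have "frac (w - c) = frac (L - s)"
  proof (rule fcong)
    have "w - c - (L - s) = (w - (tf - frac (t + y))) + ((t + y) - frac (t + y)) + (tf - t - c - c - L) + (s - (y - c))"
      by simp
    then show "w - c - (L - s) \<in> \<int>" using w1 w2 w3 Kc by (metis Ints_add)
  qed
  also have "frac (L - s) = L - s" using s L by (simp add: frac_eq)
  finally have wa: "w \<in> arc c L" using s unfolding arc_iff by (simp add: w_def frac_circ)
  have "T w = frac (t + w)" using tr[OF wa] .
  also have "\<dots> = frac (tf - y)"
  proof (rule fcong)
    have "t + w - (tf - y) = (w - (tf - frac (t + y))) + ((t + y) - frac (t + y))" by simp
    then show "t + w - (tf - y) \<in> \<int>" using w1 w2 by (metis Ints_add)
  qed
  finally show ?thesis using wa tr[OF y] w_def by simp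
qed

lemma rev:
  assumes "y \<in> D"
  shows "frac (tf - T y) \<in> D \<and> T (frac (tf - T y)) = frac (tf - y)"
proof -
  have Ka: "tf - ta - ca - ca - g \<in> \<int>"
  proof -
    have "tf - ta - ca - ca - g = (tf - ta - ca - cb) + (cb - ca - g)" by simp
    then show ?thesis using K cb_cong by (metis Ints_add)
  qed
  have Kb: "tf - tb - cb - cb - h \<in> \<int>"
  proof -
    have "tf - tb - cb - cb - h = (tf - tb - cf - cb) + (cf - cb - h)" by simp
    then show ?thesis using K2 cc_cong by (metis Ints_add)
  qed
  consider "y \<in> arc cf l" | "y \<in> arc ca g" | "y \<in> arc cb h" using assms D_eq by auto
  then show ?thesis
  proof cases
    case 1
    have yc: "y \<in> circ" using 1 arc_circ by auto
    have "frac (tf - T y) = frac y"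
    proof (rule fcong)
      have "tf - T y - y = - (frac (tf - y) - (tf - y))" using Tf[OF 1] by simp
      then show "tf - T y - y \<in> \<int>" using frac_minus_self_Ints by (metis Ints_minus)
    qed
    then have "frac (tf - T y) = y" using frac_circ_id[OF yc] by simp
    then show ?thesis using 1 assms Tf[OF 1] by simp
  next
    case 2
    then show ?thesis using rev_trans[OF Ta Ka pos(2) le1(2)] D_eq by auto
  next
    case 3
    then show ?thesis using rev_trans[OF Tb Kb pos(3) le1(3)] D_eq by auto
  qed
qed

end




context cet3
begin

lemma bounded_circ: "X \<subseteq> circ \<Longrightarrow> bounded X"
  unfolding circ_def using bounded_subset[OF bounded_Ico] by blast

lemma T_image:
  assumes A: "A \<in> sets borel" "A \<subseteq> D"
  shows "T ` A \<in> sets borel \<and> measure lebesgue (T ` A) = measure lebesgue A"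
proof -
  define Af where "Af = A \<inter> arc cf l"
  define Aa where "Aa = A \<inter> arc ca g"
  define Ab where "Ab = A \<inter> arc cb h"
  have bor: "Af \<in> sets borel" "Aa \<in> sets borel" "Ab \<in> sets borel"
    using A(1) arc_borel unfolding Af_def Aa_def Ab_def by auto
  have sub: "Af \<subseteq> circ" "Aa \<subseteq> circ" "Ab \<subseteq> circ"
    using arc_circ unfolding Af_def Aa_def Ab_def by auto
  have AU: "A = Af \<union> Aa \<union> Ab" using A(2) D_eq unfolding Af_def Aa_def Ab_def by auto
  have i1: "T ` Af = (\<lambda>x. frac (tf - x)) ` Af" using Tf unfolding Af_def by (intro image_cong) auto
  have i2: "T ` Aa = (\<lambda>x. frac (ta + x)) ` Aa" using Ta unfolding Aa_def by (intro image_cong) auto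
  have i3: "T ` Ab = (\<lambda>x. frac (tb + x)) ` Ab" using Tb unfolding Ab_def by (intro image_cong) auto
  have p1: "T ` Af \<in> sets borel \<and> measure lebesgue (T ` Af) = measure lebesgue Af"
    unfolding i1 by (rule refl_piece[OF bor(1) sub(1)])
  have p2: "T ` Aa \<in> sets borel \<and> measure lebesgue (T ` Aa) = measure lebesgue Aa"
    unfolding i2 by (rule trans_piece[OF bor(2) sub(2)])
  have p3: "T ` Ab \<in> sets borel \<and> measure lebesgue (T ` Ab) = measure lebesgue Ab"
    unfolding i3 by (rule trans_piece[OF bor(3) sub(3)])
  have dA: "Af \<inter> Aa = {}" "Af \<inter> Ab = {}" "Aa \<inter> Ab = {}"
    using disj unfolding Af_def Aa_def Ab_def by auto
  have subD: "Af \<subseteq> D" "Aa \<subseteq> D" "Ab \<subseteq> D" using A(2) unfolding Af_def Aa_def Ab_def by auto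
  have "T ` Af \<inter> T ` Aa = T ` (Af \<inter> Aa)" using inj_on_image_Int[OF inj subD(1) subD(2)] by simp
  then have dT1: "T ` Af \<inter> T ` Aa = {}" using dA by simp
  have "T ` Af \<inter> T ` Ab = T ` (Af \<inter> Ab)" using inj_on_image_Int[OF inj subD(1) subD(3)] by simp
  then have dT2: "T ` Af \<inter> T ` Ab = {}" using dA by simp
  have "T ` Aa \<inter> T ` Ab = T ` (Aa \<inter> Ab)" using inj_on_image_Int[OF inj subD(2) subD(3)] by simp
  then have dT3: "T ` Aa \<inter> T ` Ab = {}" using dA by simp
  have TA: "T ` A = T ` Af \<union> T ` Aa \<union> T ` Ab" using AU by auto
  have Tsub: "T ` Af \<subseteq> circ" "T ` Aa \<subseteq> circ" "T ` Ab \<subseteq> circ"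
    using T_circ subD by auto
  have bTA: "T ` A \<in> sets borel" unfolding TA using p1 p2 p3 by auto
  have "measure lebesgue (T ` Af \<union> T ` Aa \<union> T ` Ab)
      = measure lebesgue (T ` Af \<union> T ` Aa) + measure lebesgue (T ` Ab)"
    by (rule madd) (use p1 p2 p3 Tsub dT2 dT3 in \<open>auto intro: bounded_circ\<close>)
  also have "measure lebesgue (T ` Af \<union> T ` Aa) = measure lebesgue (T ` Af) + measure lebesgue (T ` Aa)"
    by (rule madd) (use p1 p2 p3 Tsub dT1 in \<open>auto intro: bounded_circ\<close>)
  also have "measure lebesgue (T ` Af) + measure lebesgue (T ` Aa) + measure lebesgue (T ` Ab)
     = measure lebesgue Af + measure lebesgue Aa + measure lebesgue Ab"
    using p1 p2 p3 by simp
  also have "measure lebesgue Af + measure lebesgue Aa = measure lebesgue (Af \<union> Aa)"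
    by (rule madd[symmetric]) (use bor sub dA in \<open>auto intro: bounded_circ\<close>)
  also have "measure lebesgue (Af \<union> Aa) + measure lebesgue Ab = measure lebesgue (Af \<union> Aa \<union> Ab)"
    by (rule madd[symmetric]) (use bor sub dA in \<open>auto intro: bounded_circ\<close>)
  finally have "measure lebesgue (T ` A) = measure lebesgue A" unfolding TA AU[symmetric] .
  with bTA show ?thesis by blast
qed

lemma iter_image:
  "A \<in> sets borel \<Longrightarrow> A \<subseteq> dom_iter D T j \<Longrightarrow>
    (T ^^ j) ` A \<in> sets borel \<and> (T ^^ j) ` A \<subseteq> circ \<and> measure lebesgue ((T ^^ j) ` A) = measure lebesgue A"
proof (induction j arbitrary: A)
  case 0
  then show ?case by simp
next
  case (Suc j)
  have AD: "A \<subseteq> D" and TA: "T ` A \<subseteq> dom_iter D T j" using Suc.prems by auto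
  have ti: "T ` A \<in> sets borel \<and> measure lebesgue (T ` A) = measure lebesgue A"
    using T_image[OF Suc.prems(1) AD] .
  have eq: "(T ^^ Suc j) ` A = (T ^^ j) ` (T ` A)" by (simp only: funpow_Suc_right image_comp)
  show ?case using Suc.IH[of "T ` A"] ti TA unfolding eq by simp
qed

lemma recur: "\<exists>x\<in>arc cf l. \<exists>k\<ge>1. x \<in> dom_iter D T k \<and> (T ^^ k) x \<in> arc cf l"
proof (rule ccontr)
  assume nr: "\<not> ?thesis"
  define \<delta> where "\<delta> = min l (1 - cf)"
  have \<delta>: "0 < \<delta>" "cf + \<delta> \<le> 1" "\<delta> \<le> l" "0 \<le> cf" using pos cf_circ by (auto simp: \<delta>_def circ_def)
  define I0 where "I0 = {cf<..<cf+\<delta>}"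
  have I0sub: "I0 \<subseteq> arc cf l"
  proof
    fix x assume "x \<in> I0"
    then have x: "cf < x" "x < cf + \<delta>" by (auto simp: I0_def)
    have "frac (x - cf) = x - cf" using x \<delta> by (simp add: frac_eq)
    then show "x \<in> arc cf l" using x \<delta> cf_circ unfolding arc_iff circ_def by auto
  qed
  obtain n :: nat where n: "1 / \<delta> < real n" using reals_Archimedean2 by blast
  define N where "N = n"
  have N: "1 < real (Suc N) * \<delta>"
  proof -
    have "1 < real n * \<delta>" using n \<delta> by (simp add: field_simps)
    also have "\<dots> \<le> real (Suc N) * \<delta>" using \<delta> by (simp add: N_def)
    finally show ?thesis .
  qed
  define E where "E = circ - dom_iter D T N"
  have finE: "finite E" unfolding E_def using dom_fin[OF fin inj] T_circ by blast
  define U where "U = I0 - E"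
  have Usub: "U \<subseteq> arc cf l" "U \<subseteq> dom_iter D T N"
    using I0sub arc_circ unfolding U_def E_def by auto
  have Ub: "U \<in> sets borel" unfolding U_def I0_def using finite_borel[OF finE] by auto
  have mI0: "measure lebesgue I0 = \<delta>" unfolding I0_def using \<delta>
    by (simp add: measure_def emeasure_completion)
  have Enull: "E \<in> null_sets lebesgue" using finE negligible_finite negligible_iff_null_sets by blast
  have mU: "measure lebesgue U = \<delta>" unfolding U_def
    using measure_Diff_null_set[OF _ Enull, of I0] mI0 unfolding I0_def by simp
  define S where "S j = (T ^^ j) ` U" for j
  have Sp: "S j \<in> sets borel \<and> S j \<subseteq> circ \<and> measure lebesgue (S j) = \<delta>" if "j \<le> N" for j
  proof -
    have "U \<subseteq> dom_iter D T j" using Usub(2) dom_mono[OF D_circ that] by blast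
    then have "(T ^^ j) ` U \<in> sets borel \<and> (T ^^ j) ` U \<subseteq> circ \<and> measure lebesgue ((T ^^ j) ` U) = measure lebesgue U"
      by (rule iter_image[OF Ub])
    then show ?thesis using mU unfolding S_def by simp
  qed
  have dij: "S i \<inter> S j = {}" if ij: "i < j" "j \<le> N" for i j
  proof (rule ccontr)
    assume "S i \<inter> S j \<noteq> {}"
    then obtain a b where ab: "a \<in> U" "b \<in> U" "(T ^^ i) a = (T ^^ j) b" unfolding S_def by auto
    define k where "k = j - i"
    have jk: "j = k + i" using ij unfolding k_def by simp
    have bj: "b \<in> dom_iter D T j" using ab(2) Usub(2) dom_mono[OF D_circ ij(2)] by blast
    then have bk: "b \<in> dom_iter D T k" and bki: "(T ^^ k) b \<in> dom_iter D T i"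
      using dom_add[OF D_circ, of b T k i] jk by auto
    have "U \<subseteq> dom_iter D T i" using Usub(2) dom_mono[OF D_circ, of i N] ij by auto
    then have ai: "a \<in> dom_iter D T i" using ab(1) by blast
    have jk': "j = i + k" using jk by simp
    have "(T ^^ j) b = (T ^^ i) ((T ^^ k) b)" by (simp only: jk' funpow_add comp_apply)
    then have e: "(T ^^ i) a = (T ^^ i) ((T ^^ k) b)" using ab(3) by simp
    have "a = (T ^^ k) b" by (rule inj_onD[OF inj_iter[OF inj, of i] e ai bki])
    moreover have "1 \<le> k" using ij unfolding k_def by simp
    ultimately show False using nr ab Usub bk by blast
  qed
  have disj_fam: "disjoint_family_on S {..N}"
    unfolding disjoint_family_on_def
  proof (intro ballI impI)
    fix i j assume "i \<in> {..N}" "j \<in> {..N}" "i \<noteq> j"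
    then show "S i \<inter> S j = {}" using dij[of i j] dij[of j i] by (cases "i < j") (auto simp: Int_commute)
  qed
  have "measure lebesgue (\<Union>j\<in>{..N}. S j) = (\<Sum>j\<in>{..N}. measure lebesgue (S j))"
  proof (rule measure_finite_Union)
    show "S ` {..N} \<subseteq> sets lebesgue" using Sp by auto
    show "emeasure lebesgue (S j) \<noteq> \<infinity>" if "j \<in> {..N}" for j
    proof -
      have "S j \<in> lmeasurable" using Sp[of j] that by (auto intro: borel_lmeas bounded_circ)
      then show ?thesis using fmeasurableD2 by (metis infinity_ennreal_def)
    qed
  qed (use disj_fam in auto)
  also have "\<dots> = (\<Sum>j\<in>{..N}. \<delta>)" by (rule sum.cong[OF refl]) (metis Sp atMost_iff)
  also have "\<dots> = real (Suc N) * \<delta>" by simp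
  finally have eqU: "measure lebesgue (\<Union>j\<in>{..N}. S j) = real (Suc N) * \<delta>" .
  have "measure lebesgue (\<Union>j\<in>{..N}. S j) \<le> measure lebesgue circ"
  proof (rule measure_mono_fmeasurable)
    show "(\<Union>j\<in>{..N}. S j) \<subseteq> circ" using Sp by auto
    show "(\<Union>j\<in>{..N}. S j) \<in> sets lebesgue" using Sp by auto
    show "circ \<in> lmeasurable" unfolding circ_def by (intro borel_lmeas) auto
  qed
  also have "measure lebesgue circ = 1" unfolding circ_def by (simp add: measure_def emeasure_completion)
  finally show False using eqU N by simp
qed

lemma per_from_return:
  assumes x: "x \<in> arc cf l" and k: "1 \<le> k" and xd: "x \<in> dom_iter D T k"
    and xk: "(T ^^ k) x \<in> arc cf l"
  shows "\<exists>p. periodic_point D T p"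
proof -
  define y where "y i = (T ^^ i) x" for i
  define \<sigma> where "\<sigma> u = frac (tf - u)" for u
  have yD: "y i \<in> D" if "i < k" for i
  proof -
    have "x \<in> dom_iter D T (i + 1)" using xd dom_mono[OF D_circ, of "i+1" k] that by auto
    then have "(T ^^ i) x \<in> dom_iter D T 1" using dom_add[OF D_circ, of x T i 1] by blast
    then show ?thesis by (simp add: y_def)
  qed
  have ySuc: "y (Suc i) = T (y i)" for i by (simp add: y_def)
  have claim: "\<sigma> (y k) \<in> dom_iter D T j \<and> (T ^^ j) (\<sigma> (y k)) = \<sigma> (y (k - j))" if "j \<le> k" for j
    using that
  proof (induction j)
    case 0
    then show ?case by (simp add: \<sigma>_def frac_circ)
  next
    case (Suc j)
    define i where "i = k - Suc j"
    have ik: "i < k" using Suc.prems unfolding i_def by simp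
    have kj: "k - j = Suc i" using Suc.prems unfolding i_def by simp
    have IH: "\<sigma> (y k) \<in> dom_iter D T j" "(T ^^ j) (\<sigma> (y k)) = \<sigma> (T (y i))"
      using Suc.IH Suc.prems kj ySuc by auto
    have r: "\<sigma> (T (y i)) \<in> D" "T (\<sigma> (T (y i))) = \<sigma> (y i)"
      using rev[OF yD[OF ik]] unfolding \<sigma>_def by auto
    have "(T ^^ j) (\<sigma> (y k)) \<in> dom_iter D T 1" using IH(2) r by (auto simp: \<sigma>_def frac_circ)
    then have d: "\<sigma> (y k) \<in> dom_iter D T (j + 1)" using dom_add[OF D_circ, of "\<sigma> (y k)" T j 1] IH(1) by blast
    have "(T ^^ Suc j) (\<sigma> (y k)) = T ((T ^^ j) (\<sigma> (y k)))" by simp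
    also have "\<dots> = \<sigma> (y i)" using IH(2) r by simp
    finally show ?case using d unfolding i_def by simp
  qed
  have ykf: "y k \<in> arc cf l" using xk by (simp add: y_def)
  have Tyk: "T (y k) = \<sigma> (y k)" using Tf[OF ykf] by (simp add: \<sigma>_def)
  have Tx: "T x = \<sigma> (y 0)" using Tf[OF x] by (simp add: \<sigma>_def y_def)
  have ckk: "\<sigma> (y k) \<in> dom_iter D T k" "(T ^^ k) (\<sigma> (y k)) = T x" using claim[of k] Tx by auto
  have ykD: "y k \<in> D" using ykf D_eq by auto
  have yk_dom: "y k \<in> dom_iter D T (Suc k)" using ykD Tyk ckk by simp
  have yk_it: "(T ^^ Suc k) (y k) = T x" by (simp only: funpow_Suc_right comp_apply Tyk ckk(2))
  obtain k' where k': "k = Suc k'" using k by (cases k) auto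
  have "x \<in> dom_iter D T (1 + k')" using xd k' by simp
  then have p_dom: "T x \<in> dom_iter D T k'" using dom_add[OF D_circ, of x T 1 k'] by simp
  have p_it: "(T ^^ k') (T x) = y k" unfolding y_def k' by (simp only: funpow_Suc_right comp_apply)
  have "T x \<in> dom_iter D T (k' + Suc k)"
    using dom_add[OF D_circ, of "T x" T k' "Suc k"] p_dom p_it yk_dom by simp
  moreover have "(T ^^ (k' + Suc k)) (T x) = T x"
  proof -
    have "(T ^^ (k' + Suc k)) (T x) = (T ^^ Suc k) ((T ^^ k') (T x))"
      by (simp only: add.commute[of k'] funpow_add comp_apply)
    then show ?thesis using p_it yk_it by simp
  qed
  ultimately show ?thesis unfolding periodic_point_def by (intro exI[of _ "T x"] exI[of _ "k' + Suc k"]) auto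
qed

theorem periodic_exists: "\<exists>p. periodic_point D T p"
  using recur per_from_return by blast

end




lemma arc_local:
  assumes p: "p \<in> arc a L" and L1: "L \<le> 1" and d: "\<bar>d\<bar> < min (frac (p - a)) (L - frac (p - a))"
  shows "frac (p + d) \<in> arc a L"
proof -
  define r where "r = frac (p - a)"
  have r: "0 < r" "r < L" using p unfolding arc_iff r_def by auto
  have c1: "frac (frac (p + d) - a) = frac (r + d)"
  proof (rule fcong)
    have "frac (p + d) - a - (r + d) = (frac (p + d) - (p + d)) - (frac (p - a) - (p - a))"
      by (simp add: r_def)
    then show "frac (p + d) - a - (r + d) \<in> \<int>" using frac_minus_self_Ints by (metis Ints_diff)
  qed
  have d2: "\<bar>d\<bar> < r" "\<bar>d\<bar> < L - r" using d unfolding r_def by auto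
  have rd: "0 \<le> r + d \<and> r + d < 1" using d2 r L1 by linarith
  have "frac (r + d) = r + d" using rd by (simp add: frac_eq)
  with c1 have "frac (frac (p + d) - a) = r + d" by simp
  then show ?thesis using d2 unfolding arc_iff by (auto simp: frac_circ)
qed

context cet3
begin

lemma loc1:
  assumes "p \<in> D"
  shows "\<exists>e>0. \<exists>s. (s = 1 \<or> s = -1) \<and> (\<forall>d. \<bar>d\<bar> < e \<longrightarrow> frac (p + d) \<in> D \<and> T (frac (p + d)) = frac (T p + s * d))"
proof -
  have gen: "\<exists>e>0. \<forall>d. \<bar>d\<bar> < e \<longrightarrow> frac (p + d) \<in> arc c L"
    if "p \<in> arc c L" "L \<le> 1" for c L
  proof -
    have "0 < min (frac (p - c)) (L - frac (p - c))" using that unfolding arc_iff by auto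
    then show ?thesis using arc_local[OF that(1) that(2)] by blast
  qed
  consider "p \<in> arc cf l" | "p \<in> arc ca g" | "p \<in> arc cb h" using assms D_eq by auto
  then show ?thesis
  proof cases
    case 1
    obtain e where e: "e > 0" "\<forall>d. \<bar>d\<bar> < e \<longrightarrow> frac (p + d) \<in> arc cf l" using gen[OF 1 le1(1)] by blast
    have "frac (p + d) \<in> D \<and> T (frac (p + d)) = frac (T p + (-1) * d)" if "\<bar>d\<bar> < e" for d
    proof -
      have m: "frac (p + d) \<in> arc cf l" using e that by blast
      have "T (frac (p + d)) = frac (tf - frac (p + d))" using Tf[OF m] .
      also have "\<dots> = frac (T p + (-1) * d)"
      proof (rule fcong)
        have "tf - frac (p + d) - (T p + (-1) * d) = ((p + d) - frac (p + d)) - (frac (tf - p) - (tf - p))"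
          using Tf[OF 1] by simp
        then show "tf - frac (p + d) - (T p + (-1) * d) \<in> \<int>"
          using frac_minus_self_Ints by (metis Ints_diff Ints_minus minus_diff_eq)
      qed
      finally show ?thesis using m D_eq by auto
    qed
    then show ?thesis using e(1) by (intro exI[of _ e] conjI exI[of _ "-1"]) auto
  next
    case 2
    obtain e where e: "e > 0" "\<forall>d. \<bar>d\<bar> < e \<longrightarrow> frac (p + d) \<in> arc ca g" using gen[OF 2 le1(2)] by blast
    have "frac (p + d) \<in> D \<and> T (frac (p + d)) = frac (T p + 1 * d)" if "\<bar>d\<bar> < e" for d
    proof -
      have m: "frac (p + d) \<in> arc ca g" using e that by blast
      have "T (frac (p + d)) = frac (ta + frac (p + d))" using Ta[OF m] .
      also have "\<dots> = frac (T p + 1 * d)"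
      proof (rule fcong)
        have "ta + frac (p + d) - (T p + 1 * d) = (frac (p + d) - (p + d)) - (frac (ta + p) - (ta + p))"
          using Ta[OF 2] by simp
        then show "ta + frac (p + d) - (T p + 1 * d) \<in> \<int>"
          using frac_minus_self_Ints by (metis Ints_diff)
      qed
      finally show ?thesis using m D_eq by auto
    qed
    then show ?thesis using e(1) by (intro exI[of _ e] conjI exI[of _ "1"]) auto
  next
    case 3
    obtain e where e: "e > 0" "\<forall>d. \<bar>d\<bar> < e \<longrightarrow> frac (p + d) \<in> arc cb h" using gen[OF 3 le1(3)] by blast
    have "frac (p + d) \<in> D \<and> T (frac (p + d)) = frac (T p + 1 * d)" if "\<bar>d\<bar> < e" for d
    proof -
      have m: "frac (p + d) \<in> arc cb h" using e that by blast
      have "T (frac (p + d)) = frac (tb + frac (p + d))" using Tb[OF m] .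
      also have "\<dots> = frac (T p + 1 * d)"
      proof (rule fcong)
        have "tb + frac (p + d) - (T p + 1 * d) = (frac (p + d) - (p + d)) - (frac (tb + p) - (tb + p))"
          using Tb[OF 3] by simp
        then show "tb + frac (p + d) - (T p + 1 * d) \<in> \<int>"
          using frac_minus_self_Ints by (metis Ints_diff)
      qed
      finally show ?thesis using m D_eq by auto
    qed
    then show ?thesis using e(1) by (intro exI[of _ e] conjI exI[of _ "1"]) auto
  qed
qed

lemma loc_iter:
  "p \<in> dom_iter D T m \<Longrightarrow> \<exists>e>0. \<exists>s. (s = 1 \<or> s = -1) \<and>
     (\<forall>d. \<bar>d\<bar> < e \<longrightarrow> frac (p + d) \<in> dom_iter D T m \<and> (T ^^ m) (frac (p + d)) = frac ((T ^^ m) p + s * d))"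
proof (induction m arbitrary: p)
  case 0
  then have "p \<in> circ" by simp
  then have "frac (p + d) \<in> dom_iter D T 0 \<and> (T ^^ 0) (frac (p + d)) = frac ((T ^^ 0) p + 1 * d)" for d
    by (simp add: frac_circ)
  then show ?case by (intro exI[of _ 1] conjI exI[of _ 1]) auto
next
  case (Suc m)
  have pD: "p \<in> D" and Tp: "T p \<in> dom_iter D T m" using Suc.prems by auto
  obtain e1 s1 where e1: "e1 > 0" "s1 = 1 \<or> s1 = -1"
    "\<And>d. \<bar>d\<bar> < e1 \<Longrightarrow> frac (p + d) \<in> D \<and> T (frac (p + d)) = frac (T p + s1 * d)"
    using loc1[OF pD] by blast
  obtain e2 s2 where e2: "e2 > 0" "s2 = 1 \<or> s2 = -1"
    "\<And>d. \<bar>d\<bar> < e2 \<Longrightarrow> frac (T p + d) \<in> dom_iter D T m \<and> (T ^^ m) (frac (T p + d)) = frac ((T ^^ m) (T p) + s2 * d)"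
    using Suc.IH[OF Tp] by blast
  have "frac (p + d) \<in> dom_iter D T (Suc m) \<and> (T ^^ Suc m) (frac (p + d)) = frac ((T ^^ Suc m) p + (s2 * s1) * d)"
    if d: "\<bar>d\<bar> < min e1 e2" for d
  proof -
    have a: "frac (p + d) \<in> D" "T (frac (p + d)) = frac (T p + s1 * d)" using e1(3)[of d] d by auto
    have "\<bar>s1 * d\<bar> < e2" using e1(2) d by (auto simp: abs_mult)
    then have b: "frac (T p + s1 * d) \<in> dom_iter D T m"
      "(T ^^ m) (frac (T p + s1 * d)) = frac ((T ^^ m) (T p) + s2 * (s1 * d))" using e2(3) by auto
    have "(T ^^ Suc m) (frac (p + d)) = (T ^^ m) (T (frac (p + d)))" by (simp only: funpow_Suc_right comp_apply)
    also have "\<dots> = frac ((T ^^ m) (T p) + s2 * (s1 * d))" using a b by simp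
    also have "(T ^^ m) (T p) = (T ^^ Suc m) p" by (simp only: funpow_Suc_right comp_apply)
    finally show ?thesis using a b by (simp add: mult.assoc)
  qed
  moreover have "s2 * s1 = 1 \<or> s2 * s1 = -1" using e1(2) e2(2) by auto
  ultimately show ?case using e1(1) e2(1)
    by (intro exI[of _ "min e1 e2"] conjI exI[of _ "s2 * s1"]) auto
qed

lemma per_nbhd:
  assumes "periodic_point D T p"
  shows "\<exists>e>0. \<forall>x\<in>circ. \<bar>x - p\<bar> < e \<longrightarrow> periodic_point D T x"
proof -
  obtain m where m: "1 \<le> m" "p \<in> dom_iter D T m" "(T ^^ m) p = p"
    using assms unfolding periodic_point_def by blast
  obtain e s where es: "e > 0" "s = 1 \<or> s = -1"
    "\<And>d. \<bar>d\<bar> < e \<Longrightarrow> frac (p + d) \<in> dom_iter D T m \<and> (T ^^ m) (frac (p + d)) = frac (p + s * d)"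
    using loc_iter[OF m(2)] m(3) by metis
  have "periodic_point D T x" if x: "x \<in> circ" "\<bar>x - p\<bar> < e" for x
  proof -
    define d where "d = x - p"
    have xe: "frac (p + d) = x" using x frac_circ_id unfolding d_def by simp
    have h1: "x \<in> dom_iter D T m" "(T ^^ m) x = frac (p + s * d)"
      using es(3)[of d] x xe unfolding d_def by auto
    show ?thesis
    proof (cases "s = 1")
      case True
      then show ?thesis using h1 m(1) xe unfolding periodic_point_def by auto
    next
      case False
      then have s: "s = -1" using es(2) by simp
      have "\<bar>- d\<bar> < e" using x unfolding d_def by simp
      then have h2: "frac (p + (- d)) \<in> dom_iter D T m" "(T ^^ m) (frac (p + (- d))) = frac (p + s * (- d))"
        using es(3)[of "- d"] by auto
      have e1: "(T ^^ m) x = frac (p + (- d))" using h1(2) s by simp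
      have e2: "(T ^^ m) ((T ^^ m) x) = x" using h2(2) e1 s xe by simp
      have "x \<in> dom_iter D T (m + m)" using dom_add[OF D_circ, of x T m m] h1(1) h2(1) e1 by simp
      moreover have "(T ^^ (m + m)) x = x" using e2 by (simp add: funpow_add)
      ultimately show ?thesis using m(1) unfolding periodic_point_def by (intro exI[of _ "m + m"]) auto
    qed
  qed
  then show ?thesis using es(1) by blast
qed

lemma per_all:
  assumes P: "1 \<le> P" "z \<in> dom_iter D T P" "(T ^^ P) z = z"
  shows "z \<in> dom_iter D T i \<and> (T ^^ i) z = (T ^^ (i mod P)) z"
proof (induction i rule: less_induct)
  case (less i)
  show ?case
  proof (cases "i < P")
    case True
    then show ?thesis using P(2) dom_mono[OF D_circ, of i P] by auto
  next
    case False
    define i' where "i' = i - P"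
    have ii: "i = P + i'" using False unfolding i'_def by simp
    have lt: "i' < i" using P(1) False unfolding i'_def by simp
    have IH: "z \<in> dom_iter D T i'" "(T ^^ i') z = (T ^^ (i' mod P)) z" using less[OF lt] by auto
    have "z \<in> dom_iter D T (P + i')" using dom_add[OF D_circ, of z T P i'] P(2,3) IH(1) by simp
    moreover have "(T ^^ (P + i')) z = (T ^^ i') ((T ^^ P) z)"
      by (simp only: add.commute[of P] funpow_add comp_apply)
    moreover have "i mod P = i' mod P" unfolding ii by simp
    ultimately show ?thesis using IH P(3) unfolding ii by simp
  qed
qed

lemma orbit_fin_aux:
  assumes P: "1 \<le> P" "z \<in> dom_iter D T P" "(T ^^ P) z = z"
    and q: "q \<in> dom_iter D T j" "(T ^^ j) q = z"
  shows "finite (orbit D T q)"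
proof -
  define Z where "Z = (\<lambda>i. (T ^^ i) z) ` {..<P}"
  have Zi: "(T ^^ i) z \<in> Z" for i
    using per_all[OF P, of i] P(1) unfolding Z_def by auto
  have fwd: "(T ^^ m) q \<in> (\<lambda>i. (T ^^ i) q) ` {..<j} \<union> Z" for m
  proof (cases "m < j")
    case True
    then show ?thesis by auto
  next
    case False
    then have "m = j + (m - j)" by simp
    then have "(T ^^ m) q = (T ^^ (m - j)) ((T ^^ j) q)"
      by (metis add.commute funpow_add comp_apply)
    then show ?thesis using Zi q(2) by auto
  qed
  have bwd: "r \<in> Z" if r: "r \<in> dom_iter D T m" "(T ^^ m) r = q" for r m
  proof -
    define K where "K = m + j"
    have rK: "r \<in> dom_iter D T K" using dom_add[OF D_circ, of r T m j] r q(1) unfolding K_def by simp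
    have TK: "(T ^^ K) r = z" unfolding K_def
      by (simp only: add.commute[of m] funpow_add comp_apply r(2) q(2))
    define w where "w = (T ^^ (K * P - K)) z"
    have KP: "K \<le> K * P" using P(1) by simp
    have zall: "z \<in> dom_iter D T ((K * P - K) + K)" using per_all[OF P] by blast
    then have wK: "w \<in> dom_iter D T K" using dom_add[OF D_circ, of z T "K * P - K" K] unfolding w_def by blast
    have "(T ^^ K) w = (T ^^ ((K * P - K) + K)) z" unfolding w_def
      by (simp only: add.commute[of "K * P - K"] funpow_add comp_apply)
    also have "(K * P - K) + K = K * P" using KP by simp
    also have "(T ^^ (K * P)) z = (T ^^ ((K * P) mod P)) z" using per_all[OF P] by blast
    also have "\<dots> = z" by simp
    finally have "(T ^^ K) w = z" .
    then have "r = w" using inj_onD[OF inj_iter[OF inj, of K], of r w] rK wK TK by simp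
    then show ?thesis using Zi unfolding w_def by simp
  qed
  have "orbit D T q \<subseteq> (\<lambda>i. (T ^^ i) q) ` {..<j} \<union> Z"
    unfolding orbit_def using fwd bwd by blast
  moreover have "finite ((\<lambda>i. (T ^^ i) q) ` {..<j} \<union> Z)" unfolding Z_def by simp
  ultimately show ?thesis by (rule finite_subset)
qed

lemma orbit_fin:
  assumes z: "z \<in> orbit D T q" and pz: "periodic_point D T z"
  shows "finite (orbit D T q)"
proof -
  obtain P where P: "1 \<le> P" "z \<in> dom_iter D T P" "(T ^^ P) z = z"
    using pz unfolding periodic_point_def by blast
  from z consider (f) j where "q \<in> dom_iter D T j" "z = (T ^^ j) q"
    | (b) j where "z \<in> dom_iter D T j" "(T ^^ j) z = q"
    unfolding orbit_def by blast
  then show ?thesis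
  proof cases
    case f
    then show ?thesis using orbit_fin_aux[OF P] by metis
  next
    case b
    have zz: "z \<in> dom_iter D T (j + P)" using per_all[OF P] by blast
    then have qP: "q \<in> dom_iter D T P" using dom_add[OF D_circ, of z T j P] b by blast
    have "(T ^^ P) q = (T ^^ (P + j)) z" using b(2) by (simp only: funpow_add comp_apply)
    also have "\<dots> = (T ^^ j) ((T ^^ P) z)" by (simp only: add.commute[of P] funpow_add comp_apply)
    also have "\<dots> = q" using P(3) b(2) by simp
    finally have "(T ^^ P) q = q" .
    moreover have "q \<in> dom_iter D T 0" "(T ^^ 0) q = q" using qP dom_sub[OF D_circ, of T P] by auto
    ultimately show ?thesis using orbit_fin_aux[OF P(1) qP] by blast
  qed
qed

lemma orbit_circ: "orbit D T q \<subseteq> circ"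
proof
  fix z assume "z \<in> orbit D T q"
  then consider (f) m where "q \<in> dom_iter D T m" "z = (T ^^ m) q"
    | (b) m where "z \<in> dom_iter D T m" "(T ^^ m) z = q"
    unfolding orbit_def by blast
  then show "z \<in> circ"
  proof cases
    case f
    then have "q \<in> dom_iter D T (m + 0)" by simp
    then have "(T ^^ m) q \<in> dom_iter D T 0" using dom_add[OF D_circ, of q T m 0] by blast
    then show ?thesis using f by simp
  next
    case b
    then show ?thesis using dom_sub[OF D_circ] by blast
  qed
qed

theorem not_transitive: "\<not> transitive D T"
proof
  assume "transitive D T"
  then obtain q where q: "q \<in> circ" "circ \<subseteq> closure (orbit D T q)" unfolding transitive_def by blast
  obtain p where p: "periodic_point D T p" using periodic_exists by blast
  obtain e where e: "e > 0" "\<And>x. x \<in> circ \<Longrightarrow> \<bar>x - p\<bar> < e \<Longrightarrow> periodic_point D T x"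
    using per_nbhd[OF p] by blast
  have "p \<in> circ" using p dom_sub[OF D_circ] unfolding periodic_point_def by blast
  then have "p \<in> closure (orbit D T q)" using q by blast
  then obtain z where z: "z \<in> orbit D T q" "dist z p < e" using e(1) closure_approachable by blast
  have "periodic_point D T z" using e(2)[of z] z orbit_circ by (auto simp: dist_real_def)
  then have fo: "finite (orbit D T q)" using orbit_fin z(1) by blast
  then have "closure (orbit D T q) = orbit D T q" by (simp add: finite_imp_closed)
  then have "finite circ" using q(2) fo finite_subset by metis
  then show False using infinite_Ico[of "0::real" 1] by (simp add: circ_def)
qed

end




lemma frac_neg_range: "-1 \<le> y \<Longrightarrow> y < 0 \<Longrightarrow> frac y = y + 1"
  using frac_1_eq[of y] by (simp add: frac_eq)

lemma frac_pos_range: "0 \<le> y \<Longrightarrow> y < 1 \<Longrightarrow> frac y = y"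
  by (simp add: frac_eq)

lemma arc_simple:
  assumes "0 \<le> a" "0 < L" "a + L \<le> 1"
  shows "arc a L = {a<..<a+L}"
proof (rule set_eqI)
  fix x
  show "x \<in> arc a L \<longleftrightarrow> x \<in> {a<..<a+L}"
  proof
    assume x: "x \<in> arc a L"
    then have x01: "0 \<le> x" "x < 1" and f: "0 < frac (x - a)" "frac (x - a) < L"
      unfolding arc_iff circ_def by auto
    show "x \<in> {a<..<a+L}"
    proof (cases "a \<le> x")
      case True
      then have "frac (x - a) = x - a" using x01 assms by (intro frac_pos_range) auto
      then show ?thesis using f by auto
    next
      case False
      then have "frac (x - a) = x - a + 1" using x01 assms by (intro frac_neg_range) auto
      then show ?thesis using f x01 assms by auto
    qed
  next
    assume x: "x \<in> {a<..<a+L}"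
    then have "frac (x - a) = x - a" using assms by (intro frac_pos_range) auto
    then show "x \<in> arc a L" using x assms unfolding arc_iff circ_def by auto
  qed
qed

lemma arc_wrap:
  assumes "0 \<le> b" "b < a" "a < 1"
  shows "arc a (1 + b - a) = {a<..<1} \<union> {0..<b}"
proof (rule set_eqI)
  fix x
  show "x \<in> arc a (1 + b - a) \<longleftrightarrow> x \<in> {a<..<1} \<union> {0..<b}"
  proof (cases "0 \<le> x \<and> x < 1")
    case False
    then show ?thesis using assms unfolding arc_iff circ_def by auto
  next
    case x01: True
    show ?thesis
    proof (cases "a \<le> x")
      case True
      then have "frac (x - a) = x - a" using x01 assms by (intro frac_pos_range) auto
      then show ?thesis using x01 assms True unfolding arc_iff circ_def by auto
    next
      case False
      then have "frac (x - a) = x - a + 1" using x01 assms by (intro frac_neg_range) auto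
      then show ?thesis using x01 assms False unfolding arc_iff circ_def by auto
    qed
  qed
qed

lemma mk_gen:
  assumes cd: "cet_data 3 c t fl D T" and fl: "fl f" "\<not> fl a" "\<not> fl b"
    and fab: "(f = 0 \<and> a = 1 \<and> b = 2) \<or> (f = 1 \<and> a = 2 \<and> b = 0) \<or> (f = 2 \<and> a = 0 \<and> b = 1)"
  shows "cet3 D T (c f) (c a) (c b) (cut_len 3 c f) (cut_len 3 c a) (cut_len 3 c b) (t f) (t a) (t b)"
proof -
  note cdd = cd[unfolded cet_data_def]
  have c0: "0 \<le> c 0" using cdd by blast
  have "c (3 - 1) < 1" using cdd by blast
  then have c2: "c 2 < 1" by simp
  have mono: "\<forall>i. Suc i < 3 \<longrightarrow> c i < c (Suc i)" using cdd by blast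
  have c01: "c 0 < c 1" using mono[rule_format, of 0] by simp
  have "c 1 < c (Suc 1)" using mono[rule_format, of 1] by simp
  then have c12: "c 1 < c 2" unfolding Suc_1 .
  have L: "cut_len 3 c 0 = c 1 - c 0" "cut_len 3 c 1 = c 2 - c 1" "cut_len 3 c 2 = 1 + c 0 - c 2"
    by (simp_all add: cut_len_def numeral_eq_Suc)
  have A: "arc (c 0) (cut_len 3 c 0) = {c 0<..<c 1}" "arc (c 1) (cut_len 3 c 1) = {c 1<..<c 2}"
      "arc (c 2) (cut_len 3 c 2) = {c 2<..<1} \<union> {0..<c 0}"
    using arc_simple[of "c 0" "c 1 - c 0"] arc_simple[of "c 1" "c 2 - c 1"] arc_wrap[of "c 0" "c 2"]
      c0 c2 c01 c12 L by simp_all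
  have Dcut: "D = (\<Union>i<3. cut_int 3 c i)" using cdd by blast
  have l3: "{..<3::nat} = {0, 1, 2}" by auto
  have D3: "D = arc (c 0) (cut_len 3 c 0) \<union> arc (c 1) (cut_len 3 c 1) \<union> arc (c 2) (cut_len 3 c 2)"
    unfolding Dcut cut_int_def l3 by auto
  have TP0: "\<forall>i<3. \<forall>x\<in>cut_int 3 c i. T x = piece t fl i x" using cdd by blast
  have TP: "\<And>i x. i < 3 \<Longrightarrow> x \<in> arc (c i) (cut_len 3 c i) \<Longrightarrow> T x = piece t fl i x"
    using TP0 unfolding cut_int_def by blast
  have inj: "inj_on T D" using cdd by blast
  have mx0: "\<forall>i<3. piece t fl ((i + 3 - 1) mod 3) (c i) \<noteq> piece t fl i (c i)" using cdd by blast
  have mx: "\<And>i. i < 3 \<Longrightarrow> piece t fl ((i + 2) mod 3) (c i) \<noteq> piece t fl i (c i)"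
    using mx0 by simp
  have Dexp: "D = {c 0<..<c 1} \<union> {c 1<..<c 2} \<union> ({c 2<..<1} \<union> {0..<c 0})"
    using D3 A by simp
  have fin: "finite (circ - D)"
  proof (rule finite_subset)
    show "circ - D \<subseteq> {c 0, c 1, c 2}"
    proof
      fix x assume "x \<in> circ - D"
      then have "0 \<le> x" "x < 1" "x \<notin> D" by (auto simp: circ_def)
      then show "x \<in> {c 0, c 1, c 2}" unfolding Dexp using c0 c2 c01 c12 by auto
    qed
  qed simp
  have ab: "a < 3" "b < 3" "f < 3" using fab by auto
  have mxb: "frac (t a + c b) \<noteq> frac (t b + c b)"
  proof -
    have "(b + 2) mod 3 = a" using fab by auto
    then show ?thesis using mx[OF ab(2)] fl unfolding piece_def by simp
  qed
  have Tf: "\<And>x. x \<in> arc (c f) (cut_len 3 c f) \<Longrightarrow> T x = frac (t f - x)"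
    using TP[OF ab(3)] fl(1) unfolding piece_def by simp
  have Ta: "\<And>x. x \<in> arc (c a) (cut_len 3 c a) \<Longrightarrow> T x = frac (t a + x)"
    using TP[OF ab(1)] fl(2) unfolding piece_def by simp
  have Tb: "\<And>x. x \<in> arc (c b) (cut_len 3 c b) \<Longrightarrow> T x = frac (t b + x)"
    using TP[OF ab(2)] fl(3) unfolding piece_def by simp
  have Dfab: "D = arc (c f) (cut_len 3 c f) \<union> arc (c a) (cut_len 3 c a) \<union> arc (c b) (cut_len 3 c b)"
    using D3 fab by auto
  have disj01: "{c 0<..<c 1} \<inter> {c 1<..<c 2} = {}" "{c 0<..<c 1} \<inter> ({c 2<..<1} \<union> {0..<c 0}) = {}"
    "{c 1<..<c 2} \<inter> ({c 2<..<1} \<union> {0..<c 0}) = {}"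
    using c01 c12 by auto
  show ?thesis
  proof (unfold_locales)
    show "0 < cut_len 3 c f" "0 < cut_len 3 c a" "0 < cut_len 3 c b"
      "cut_len 3 c f + cut_len 3 c a + cut_len 3 c b = 1"
      using fab L c01 c12 c0 c2 by auto
    show "c f \<in> circ" using fab c0 c2 c01 c12 by (auto simp: circ_def)
    show "c a - c f - cut_len 3 c f \<in> \<int>" "c b - c a - cut_len 3 c a \<in> \<int>"
      using fab L by auto
    show "D = arc (c f) (cut_len 3 c f) \<union> arc (c a) (cut_len 3 c a) \<union> arc (c b) (cut_len 3 c b)"
      by (rule Dfab)
    show "arc (c f) (cut_len 3 c f) \<inter> arc (c a) (cut_len 3 c a) = {}"
      "arc (c f) (cut_len 3 c f) \<inter> arc (c b) (cut_len 3 c b) = {}"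
      "arc (c a) (cut_len 3 c a) \<inter> arc (c b) (cut_len 3 c b) = {}"
      using fab A disj01 by (auto simp: Int_commute)
  qed (use Tf Ta Tb inj mxb fin in auto)
qed

theorem theorem3p1:
  shows "(\<forall>D T. cet_flips 3 1 D T \<longrightarrow> (\<exists>p. periodic_point D T p))
       \<and> \<not> (\<exists>D T. cet_flips 3 1 D T \<and> transitive D T)"
proof -
  have main: "\<exists>a b c l g h ta tb tc. cet3 D T a b c l g h ta tb tc" if cfl: "cet_flips 3 1 D T" for D T
  proof -
    obtain c t fl where cd: "cet_data 3 c t fl D T" and card: "card {i. i < 3 \<and> fl i} = 1"
      using cfl unfolding cet_flips_def by blast
    obtain f where f: "{i. i < 3 \<and> fl i} = {f}" using card card_1_singletonE by blast
    then have ff: "f < 3" "fl f" "\<And>i. i < 3 \<Longrightarrow> i \<noteq> f \<Longrightarrow> \<not> fl i" by auto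
    have "f = 0 \<or> f = 1 \<or> f = 2" using ff(1) by auto
    then show ?thesis
    proof (elim disjE)
      assume f0: "f = 0"
      have "cet3 D T (c f) (c 1) (c 2) (cut_len 3 c f) (cut_len 3 c 1) (cut_len 3 c 2) (t f) (t 1) (t 2)"
        using mk_gen[OF cd ff(2), of 1 2] ff f0 by simp
      then show ?thesis by blast
    next
      assume f0: "f = 1"
      have "cet3 D T (c f) (c 2) (c 0) (cut_len 3 c f) (cut_len 3 c 2) (cut_len 3 c 0) (t f) (t 2) (t 0)"
        using mk_gen[OF cd ff(2), of 2 0] ff f0 by simp
      then show ?thesis by blast
    next
      assume f0: "f = 2"
      have "cet3 D T (c f) (c 0) (c 1) (cut_len 3 c f) (cut_len 3 c 0) (cut_len 3 c 1) (t f) (t 0) (t 1)"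
        using mk_gen[OF cd ff(2), of 0 1] ff f0 by simp
      then show ?thesis by blast
    qed
  qed
  show ?thesis
  proof (intro conjI allI impI notI)
    fix D T assume "cet_flips 3 1 D T"
    then obtain a b c l g h ta tb tc where "cet3 D T a b c l g h ta tb tc" using main by blast
    then show "\<exists>p. periodic_point D T p" by (rule cet3.periodic_exists)
  next
    assume "\<exists>D T. cet_flips 3 1 D T \<and> transitive D T"
    then obtain D T where dt: "cet_flips 3 1 D T" "transitive D T" by blast
    then obtain a b c l g h ta tb tc where "cet3 D T a b c l g h ta tb tc" using main by blast
    then have "\<not> transitive D T" by (rule cet3.not_transitive)
    then show False using dt(2) by blast
  qed
qed


end
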